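(* Let $M,N,S\ge1$ be integers. Suppose that for every $m\in[M]$, $\{X_{m,n}\}_{n\in[N]}$ are independent Bernoulli random variables, with $\sum_{m\in[M]}\mathbb E[X_{m,n}]=1$ for every $n\in[N]$, and let $\{C_{m,n}\}_{m\in[M],n\in[N]}\subset\mathbb R^S$ be constant vectors with $|C_{m,n}|_1\le C$ for all $m,n$. Then $$\sum_{s=1}^S\sum_{m=1}^M\mathbb E\Big|\sum_{n=1}^NC_{m,n}(s)\big(X_{m,n}-\mathbb E[X_{m,n}]\big)\Big|\le C\sqrt{MNS}.$$
   Context: $[M]=\{1,\dots,M\}$; $C_{m,n}(s)$ is the $s$-th coordinate of $C_{m,n}$; $|\cdot|_1$ is the $L_1$ norm. *)

theory Defs
  imports "HOL-Probability.Probability"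
begin

end

theory Submission
  imports Defs
begin

lemma amgm_abs:
  fixes y t :: real assumes "t > 0"
  shows "\<bar>y\<bar> \<le> (y^2 / t + t) / 2"
proof -
  have "0 \<le> (\<bar>y\<bar> - t)^2" by simp
  hence "2 * t * \<bar>y\<bar> \<le> y^2 + t^2" by (simp add: power2_eq_square algebra_simps)
  thus ?thesis using assms by (simp add: field_simps power2_eq_square)
qed

context prob_space
begin

lemma bern_int:
  assumes "X \<in> borel_measurable M" "AE \<omega> in M. X \<omega> \<in> {0, 1::real}"
  shows "integrable M X" "0 \<le> expectation X" "expectation X \<le> 1"
proof -
  show i: "integrable M X"
    by (rule integrable_const_bound[where B=1]) (use assms in auto)
  show "0 \<le> expectation X"
    by (rule integral_nonneg_AE) (use assms(2) in auto)
  have "expectation X \<le> expectation (\<lambda>_. 1)"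
    by (rule integral_mono_AE) (use assms i in auto)
  thus "expectation X \<le> 1" by (simp add: prob_space)
qed

lemma var_bound:
  fixes X :: "nat \<Rightarrow> 'a \<Rightarrow> real" and c :: "nat \<Rightarrow> real"
  assumes fin: "finite I" and ind: "indep_vars (\<lambda>_. borel) X I"
    and rv: "\<And>i. i \<in> I \<Longrightarrow> X i \<in> borel_measurable M"
    and b: "\<And>i. i \<in> I \<Longrightarrow> AE \<omega> in M. X i \<omega> \<in> {0, 1}"
  shows "integrable M (\<lambda>\<omega>. (\<Sum>i\<in>I. c i * (X i \<omega> - expectation (X i)))^2)"
    "expectation (\<lambda>\<omega>. (\<Sum>i\<in>I. c i * (X i \<omega> - expectation (X i)))^2)
       \<le> (\<Sum>i\<in>I. (c i)^2 * expectation (X i))"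
proof -
  define p where "p i = expectation (X i)" for i
  define Z where "Z i \<omega> = X i \<omega> - p i" for i \<omega>
  note bi = bern_int[OF rv b]
  have p01: "0 \<le> p i" "p i \<le> 1" if "i \<in> I" for i using bi that by (auto simp: p_def)
  have intZZ: "integrable M (\<lambda>\<omega>. Z i \<omega> * Z j \<omega>)" if "i \<in> I" "j \<in> I" for i j
  proof (rule integrable_const_bound[where B=1])
    show "AE x in M. norm (Z i x * Z j x) \<le> 1"
      using b[OF that(1)] b[OF that(2)]
    proof eventually_elim
      case (elim x)
      thus ?case using p01[OF that(1)] p01[OF that(2)]
        by (auto simp: Z_def abs_mult intro!: mult_le_one)
    qed
    show "(\<lambda>\<omega>. Z i \<omega> * Z j \<omega>) \<in> borel_measurable M"
      using rv that by (simp add: Z_def)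
  qed
  have cross: "expectation (\<lambda>\<omega>. Z i \<omega> * Z j \<omega>) = 0" if "i \<in> I" "j \<in> I" "i \<noteq> j" for i j
  proof -
    have ind2: "indep_vars (\<lambda>_. borel) X {i, j}"
      by (rule indep_vars_subset[OF ind]) (use that in auto)
    have "expectation (\<lambda>\<omega>. \<Prod>k\<in>{i,j}. X k \<omega>) = (\<Prod>k\<in>{i,j}. expectation (X k))"
      by (rule indep_vars_lebesgue_integral[OF _ ind2]) (use bi that in auto)
    hence e: "expectation (\<lambda>\<omega>. X i \<omega> * X j \<omega>) = p i * p j"
      using that by (simp add: p_def)
    have ii: "integrable M (X i)" "integrable M (X j)" using bi that by auto
    have "(\<lambda>\<omega>. Z i \<omega> * Z j \<omega>) = (\<lambda>\<omega>. X i \<omega> * X j \<omega> - p j * X i \<omega> - p i * X j \<omega> + p i * p j)"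
      by (auto simp: Z_def algebra_simps)
    moreover have "integrable M (\<lambda>\<omega>. \<Prod>k\<in>{i,j}. X k \<omega>)"
      by (rule indep_vars_integrable[OF _ ind2]) (use bi that in auto)
    hence "integrable M (\<lambda>\<omega>. X i \<omega> * X j \<omega>)" using that by simp
    ultimately show ?thesis using ii e
      by (simp add: integral_add integral_diff prob_space p_def)
  qed
  have diag: "expectation (\<lambda>\<omega>. Z i \<omega> * Z i \<omega>) \<le> p i" if "i \<in> I" for i
  proof -
    have "AE \<omega> in M. Z i \<omega> * Z i \<omega> = (1 - 2 * p i) * X i \<omega> + (p i)^2"
      using b[OF that] by eventually_elim (auto simp: Z_def power2_eq_square algebra_simps)
    hence "expectation (\<lambda>\<omega>. Z i \<omega> * Z i \<omega>) = expectation (\<lambda>\<omega>. (1 - 2 * p i) * X i \<omega> + (p i)^2)"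
      by (rule integral_cong_AE[rotated 2]) (use rv that in \<open>auto simp: Z_def\<close>)
    also have "\<dots> = (1 - 2 * p i) * p i + (p i)^2"
      using bi that by (simp add: integral_add p_def prob_space)
    finally have "expectation (\<lambda>\<omega>. Z i \<omega> * Z i \<omega>) = (1 - 2 * p i) * p i + (p i)^2" .
    moreover have "0 \<le> p i * p i" using p01[OF that] by simp
    moreover have "(1 - 2 * p i) * p i + (p i)^2 = p i - p i * p i"
      by (simp add: power2_eq_square algebra_simps)
    ultimately show ?thesis by linarith
  qed
  have sq: "(\<lambda>\<omega>. (\<Sum>i\<in>I. c i * (X i \<omega> - expectation (X i)))^2)
      = (\<lambda>\<omega>. \<Sum>i\<in>I. \<Sum>j\<in>I. c i * c j * (Z i \<omega> * Z j \<omega>))"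
    by (auto simp: power2_eq_square sum_product Z_def p_def algebra_simps)
  have intsum: "integrable M (\<lambda>\<omega>. \<Sum>i\<in>I. \<Sum>j\<in>I. c i * c j * (Z i \<omega> * Z j \<omega>))"
    using intZZ by auto
  show "integrable M (\<lambda>\<omega>. (\<Sum>i\<in>I. c i * (X i \<omega> - expectation (X i)))^2)"
    unfolding sq by (rule intsum)
  have "expectation (\<lambda>\<omega>. \<Sum>i\<in>I. \<Sum>j\<in>I. c i * c j * (Z i \<omega> * Z j \<omega>))
      = (\<Sum>i\<in>I. \<Sum>j\<in>I. c i * c j * expectation (\<lambda>\<omega>. Z i \<omega> * Z j \<omega>))"
    using intZZ by (simp add: integral_sum integrable_sum)
  also have "\<dots> = (\<Sum>i\<in>I. c i * c i * expectation (\<lambda>\<omega>. Z i \<omega> * Z i \<omega>))"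
  proof (rule sum.cong[OF refl])
    fix i assume i: "i \<in> I"
    have "(\<Sum>j\<in>I. c i * c j * expectation (\<lambda>\<omega>. Z i \<omega> * Z j \<omega>))
        = (\<Sum>j\<in>I. if j = i then c i * c i * expectation (\<lambda>\<omega>. Z i \<omega> * Z i \<omega>) else 0)"
      by (rule sum.cong[OF refl]) (use cross i in auto)
    also have "\<dots> = c i * c i * expectation (\<lambda>\<omega>. Z i \<omega> * Z i \<omega>)"
      using fin i by simp
    finally show "(\<Sum>j\<in>I. c i * c j * expectation (\<lambda>\<omega>. Z i \<omega> * Z j \<omega>))
        = c i * c i * expectation (\<lambda>\<omega>. Z i \<omega> * Z i \<omega>)" .
  qed
  also have "\<dots> \<le> (\<Sum>i\<in>I. (c i)^2 * p i)"
    by (rule sum_mono) (use diag in \<open>auto simp: power2_eq_square intro!: mult_left_mono\<close>)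
  finally show "expectation (\<lambda>\<omega>. (\<Sum>i\<in>I. c i * (X i \<omega> - expectation (X i)))^2)
       \<le> (\<Sum>i\<in>I. (c i)^2 * expectation (X i))"
    unfolding sq p_def by simp
qed

end


lemma sq_le_l1:
  fixes c :: "nat \<Rightarrow> real"
  assumes "finite A" "(\<Sum>s\<in>A. \<bar>c s\<bar>) \<le> C"
  shows "(\<Sum>s\<in>A. (c s)^2) \<le> C^2"
proof -
  define T where "T = (\<Sum>s\<in>A. \<bar>c s\<bar>)"
  have T0: "0 \<le> T" by (simp add: T_def sum_nonneg)
  have "(\<Sum>s\<in>A. (c s)^2) = (\<Sum>s\<in>A. \<bar>c s\<bar> * \<bar>c s\<bar>)"
    by (simp add: power2_eq_square abs_mult_self_eq)
  also have "\<dots> \<le> (\<Sum>s\<in>A. \<bar>c s\<bar> * T)"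
    by (rule sum_mono, rule mult_left_mono) (auto simp: T_def intro!: member_le_sum assms(1))
  also have "\<dots> = T * T" by (simp add: T_def sum_distrib_right)
  also have "\<dots> \<le> C * C" using T0 assms(2) unfolding T_def[symmetric]
    by (intro mult_mono) auto
  finally show ?thesis by (simp add: power2_eq_square)
qed

theorem lemma5:
  fixes P :: "'a measure"
    and X :: "nat \<Rightarrow> nat \<Rightarrow> 'a \<Rightarrow> real"
    and Cv :: "nat \<Rightarrow> nat \<Rightarrow> nat \<Rightarrow> real"
    and C :: real
    and M N S :: nat
  assumes "prob_space P"
    and "M \<ge> 1" and "N \<ge> 1" and "S \<ge> 1"
    and rv: "\<And>m n. m \<in> {1..M} \<Longrightarrow> n \<in> {1..N} \<Longrightarrow> X m n \<in> borel_measurable P"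
    and bern: "\<And>m n. m \<in> {1..M} \<Longrightarrow> n \<in> {1..N} \<Longrightarrow>
                 AE \<omega> in P. X m n \<omega> \<in> {0, 1}"
    and indep: "\<And>m. m \<in> {1..M} \<Longrightarrow>
                 prob_space.indep_vars P (\<lambda>_. borel) (\<lambda>n. X m n) {1..N}"
    and sum1: "\<And>n. n \<in> {1..N} \<Longrightarrow>
                 (\<Sum>m=1..M. prob_space.expectation P (X m n)) = 1"
    and bound: "\<And>m n. m \<in> {1..M} \<Longrightarrow> n \<in> {1..N} \<Longrightarrow>
                 (\<Sum>s=1..S. \<bar>Cv m n s\<bar>) \<le> C"
  shows "(\<Sum>s=1..S. \<Sum>m=1..M. prob_space.expectation P
            (\<lambda>\<omega>. \<bar>\<Sum>n=1..N. Cv m n s * (X m n \<omega> - prob_space.expectation P (X m n))\<bar>))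
         \<le> C * sqrt (real M * real N * real S)"
proof -
  interpret prob_space P by fact
  define p where "p m n = expectation (X m n)" for m n
  define Y where "Y m s \<omega> = (\<Sum>n=1..N. Cv m n s * (X m n \<omega> - expectation (X m n)))" for m s \<omega>
  have vb: "integrable P (\<lambda>\<omega>. (Y m s \<omega>)^2)"
     "expectation (\<lambda>\<omega>. (Y m s \<omega>)^2) \<le> (\<Sum>n=1..N. (Cv m n s)^2 * p m n)"
    if "m \<in> {1..M}" for m s
    using var_bound[of "{1..N}" "X m" "\<lambda>n. Cv m n s"] indep[OF that] rv[OF that] bern[OF that]
    by (auto simp: Y_def p_def)
  have intY: "integrable P (Y m s)" if "m \<in> {1..M}" for m s
  proof -
    have "integrable P (X m n)" if "n \<in> {1..N}" for n
      using bern_int(1)[OF rv bern] \<open>m \<in> {1..M}\<close> that by auto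
    thus ?thesis unfolding Y_def by auto
  qed
  have p0: "0 \<le> p m n" if "m \<in> {1..M}" "n \<in> {1..N}" for m n
    using bern_int(2)[OF rv bern] that by (auto simp: p_def)
  have step1: "expectation (\<lambda>\<omega>. \<bar>Y m s \<omega>\<bar>) \<le> (expectation (\<lambda>\<omega>. (Y m s \<omega>)^2) / t + t) / 2"
    if "m \<in> {1..M}" "t > 0" for m s and t :: real
  proof -
    have "expectation (\<lambda>\<omega>. \<bar>Y m s \<omega>\<bar>) \<le> expectation (\<lambda>\<omega>. ((Y m s \<omega>)^2 / t + t) / 2)"
      by (rule integral_mono) (use intY[OF that(1)] vb(1)[OF that(1)] amgm_abs[OF that(2)] in auto)
    also have "\<dots> = (expectation (\<lambda>\<omega>. (Y m s \<omega>)^2) / t + t) / 2"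
      using vb(1)[OF that(1)] by (simp add: prob_space)
    finally show ?thesis .
  qed
  have step2: "(\<Sum>s=1..S. \<Sum>m=1..M. expectation (\<lambda>\<omega>. (Y m s \<omega>)^2)) \<le> C^2 * N"
  proof -
    have "(\<Sum>s=1..S. \<Sum>m=1..M. expectation (\<lambda>\<omega>. (Y m s \<omega>)^2))
        \<le> (\<Sum>s=1..S. \<Sum>m=1..M. \<Sum>n=1..N. (Cv m n s)^2 * p m n)"
      by (intro sum_mono vb(2)) auto
    also have "\<dots> = (\<Sum>m=1..M. \<Sum>n=1..N. p m n * (\<Sum>s=1..S. (Cv m n s)^2))"
    proof -
      have "(\<Sum>s=1..S. \<Sum>m=1..M. \<Sum>n=1..N. (Cv m n s)^2 * p m n)
          = (\<Sum>m=1..M. \<Sum>s=1..S. \<Sum>n=1..N. (Cv m n s)^2 * p m n)" by (rule sum.swap)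
      also have "\<dots> = (\<Sum>m=1..M. \<Sum>n=1..N. \<Sum>s=1..S. (Cv m n s)^2 * p m n)"
        by (rule sum.cong[OF refl], rule sum.swap)
      finally show ?thesis by (simp add: sum_distrib_left mult.commute)
    qed
    also have "\<dots> \<le> (\<Sum>m=1..M. \<Sum>n=1..N. p m n * C^2)"
      by (intro sum_mono mult_left_mono sq_le_l1 bound p0) auto
    also have "\<dots> = C^2 * (\<Sum>n=1..N. \<Sum>m=1..M. p m n)"
      by (subst sum.swap) (simp add: sum_distrib_left sum_distrib_right mult.commute)
    also have "\<dots> = C^2 * N" using sum1 by (simp add: p_def)
    finally show ?thesis .
  qed
  define L where "L = (\<Sum>s=1..S. \<Sum>m=1..M. expectation (\<lambda>\<omega>. \<bar>Y m s \<omega>\<bar>))"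
  have key: "L \<le> C^2 * N / (2 * t) + M * S * t / 2" if "t > 0" for t :: real
  proof -
    have "L \<le> (\<Sum>s=1..S. \<Sum>m=1..M. (expectation (\<lambda>\<omega>. (Y m s \<omega>)^2) / t + t) / 2)"
      unfolding L_def using that by (intro sum_mono step1) auto
    also have "\<dots> = (\<Sum>s=1..S. \<Sum>m=1..M. expectation (\<lambda>\<omega>. (Y m s \<omega>)^2)) / (2 * t) + M * S * t / 2"
      by (simp add: sum.distrib sum_divide_distrib[symmetric] add_divide_distrib mult_ac)
    also have "\<dots> \<le> C^2 * N / (2 * t) + M * S * t / 2"
      using step2 that by (intro add_right_mono divide_right_mono) auto
    finally show ?thesis .
  qed
  have C0: "0 \<le> C"
  proof -
    have "(\<Sum>s = 1..S. \<bar>Cv 1 1 s\<bar>) \<le> C" using bound[of 1 1] assms(2,3) by auto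
    moreover have "0 \<le> (\<Sum>s = 1..S. \<bar>Cv 1 1 s\<bar>)" by (simp add: sum_nonneg)
    ultimately show ?thesis by linarith
  qed
  have L_eq: "(\<Sum>s=1..S. \<Sum>m=1..M. prob_space.expectation P
            (\<lambda>\<omega>. \<bar>\<Sum>n=1..N. Cv m n s * (X m n \<omega> - prob_space.expectation P (X m n))\<bar>)) = L"
    by (simp add: L_def Y_def)
  have MS: "0 < real M * real S" "0 < real N" using assms(2,3,4) by auto
  show ?thesis
  proof (cases "C = 0")
    case True
    have "L \<le> 0"
    proof (rule ccontr)
      assume "\<not> L \<le> 0"
      hence Lp: "L > 0" by simp
      define q where "q = real M * real S"
      have q0: "q > 0" using MS by (simp add: q_def)
      define t where "t = L / q"
      have tp: "t > 0" using Lp q0 by (simp add: t_def)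
      have "L \<le> q * t / 2" using key[OF tp] True by (simp add: q_def)
      also have "q * t = L" using q0 by (simp add: t_def)
      finally show False using Lp by simp
    qed
    thus ?thesis using L_eq True by simp
  next
    case False
    hence Cp: "C > 0" using C0 by simp
    define a where "a = sqrt (real N)"
    define b where "b = sqrt (real M * real S)"
    have a0: "a > 0" using MS by (simp add: a_def)
    have b0: "b > 0" using MS by (simp add: b_def)
    have a2: "a^2 = real N" by (simp add: a_def)
    have b2: "b^2 = real M * real S" using MS by (simp add: b_def)
    define t where "t = C * a / b"
    have tp: "t > 0" using Cp a0 b0 by (simp add: t_def)
    have "L \<le> C^2 * N / (2 * t) + M * S * t / 2" by (rule key[OF tp])
    also have "C^2 * N / (2 * t) = C * a * b / 2"
    proof -
      have "C^2 * N / (2 * t) = C^2 * a^2 / (2 * (C * a / b))" by (simp add: a2 t_def)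
      also have "\<dots> = C * a * b / 2" using Cp a0 b0 by (simp add: field_simps power2_eq_square)
      finally show ?thesis .
    qed
    also have "M * S * t / 2 = C * a * b / 2"
    proof -
      have "M * S * t / 2 = b^2 * (C * a / b) / 2" by (simp add: b2 t_def)
      also have "\<dots> = C * a * b / 2" using b0 by (simp add: field_simps power2_eq_square)
      finally show ?thesis .
    qed
    also have "C * a * b / 2 + C * a * b / 2 = C * sqrt (real M * real N * real S)"
    proof -
      have "sqrt (real M * real N * real S) = a * b"
        by (simp add: a_def b_def real_sqrt_mult[symmetric] mult_ac)
      thus ?thesis by simp
    qed
    finally show ?thesis using L_eq by simp
  qed
qed

end
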